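(* For every partial symmetric Boolean function $f:\{0,1\}^N\to\{0,1,\ast\}$, we have $\operatorname{R}(f)=O(\operatorname{Q}(f)^2)$, with an absolute implied constant.
   Context: A partial Boolean function $f:\{0,1\}^N\to\{0,1,\ast\}$ is defined on $S=\{X:f(X)\ne\ast\}$; it is symmetric if $f(X)$ depends only on the Hamming weight $|X|=x_1+\dots+x_N$. $\operatorname{R}(f)$ is the bounded-error randomized query complexity (expected number of queries of an optimal randomized algorithm that outputs $f(X)$ with probability $\ge2/3$ for every $X\in S$), and $\operatorname{Q}(f)$ is the bounded-error quantum query complexity (minimum number of queries of a quantum algorithm outputting $f(X)$ with probability $\ge2/3$ for every $X\in S$). *)

theory Defs
  imports "HOL-Probability.Probability"
begin

(* Inputs X \<in> {0,1}^N are bool lists of length N (True = 1).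
   A partial Boolean function is f :: bool list \<Rightarrow> bool option, None playing the role of *.
   Only its values on lists of length N matter. *)

definition hamming_weight :: "bool list \<Rightarrow> nat" where
  "hamming_weight X = length (filter id X)"

definition dom_pf :: "nat \<Rightarrow> (bool list \<Rightarrow> bool option) \<Rightarrow> bool list set" where
  "dom_pf N f = {X. length X = N \<and> f X \<noteq> None}"

definition symmetric_pf :: "nat \<Rightarrow> (bool list \<Rightarrow> bool option) \<Rightarrow> bool" where
  "symmetric_pf N f \<longleftrightarrow>
     (\<forall>X Y. length X = N \<longrightarrow> length Y = N \<longrightarrow> hamming_weight X = hamming_weight Y \<longrightarrow> f X = f Y)"

(* deterministic decision tree: Query i l r queries x_i, goes to l if x_i = 0, to r if x_i = 1 *)
datatype dtree = Leaf bool | Query nat dtree dtree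

fun valid_tree :: "nat \<Rightarrow> dtree \<Rightarrow> bool" where
  "valid_tree N (Leaf b) = True"
| "valid_tree N (Query i l r) = (i < N \<and> valid_tree N l \<and> valid_tree N r)"

fun eval_tree :: "dtree \<Rightarrow> bool list \<Rightarrow> bool" where
  "eval_tree (Leaf b) X = b"
| "eval_tree (Query i l r) X = (if X ! i then eval_tree r X else eval_tree l X)"

fun nqueries :: "dtree \<Rightarrow> bool list \<Rightarrow> nat" where
  "nqueries (Leaf b) X = 0"
| "nqueries (Query i l r) X = Suc (if X ! i then nqueries r X else nqueries l X)"

(* a randomized algorithm = probability distribution over decision trees *)
definition rand_alg_correct :: "nat \<Rightarrow> (bool list \<Rightarrow> bool option) \<Rightarrow> dtree pmf \<Rightarrow> bool" where
  "rand_alg_correct N f P \<longleftrightarrow>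
     (\<forall>t \<in> set_pmf P. valid_tree N t) \<and>
     (\<forall>X \<in> dom_pf N f. measure_pmf.prob P {t. eval_tree t X = the (f X)} \<ge> 2/3)"

definition rand_alg_cost :: "nat \<Rightarrow> (bool list \<Rightarrow> bool option) \<Rightarrow> dtree pmf \<Rightarrow> ennreal" where
  "rand_alg_cost N f P = (SUP X \<in> dom_pf N f. \<integral>\<^sup>+ t. ennreal (real (nqueries t X)) \<partial>(measure_pmf P))"

definition R_cplx :: "nat \<Rightarrow> (bool list \<Rightarrow> bool option) \<Rightarrow> ennreal" where
  "R_cplx N f = (INF P \<in> {P. rand_alg_correct N f P}. rand_alg_cost N f P)"

(* computational basis states |i, b, w>: query index i < N, target bit b, workspace w < W *)
type_synonym qbasis = "nat \<times> bool \<times> nat"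

definition qspace :: "nat \<Rightarrow> nat \<Rightarrow> qbasis set" where
  "qspace N W = {0..<N} \<times> (UNIV :: bool set) \<times> {0..<W}"

(* an operator given by its matrix entries U r s (r,s basis states), restricted to B *)
definition unitary_on :: "qbasis set \<Rightarrow> (qbasis \<Rightarrow> qbasis \<Rightarrow> complex) \<Rightarrow> bool" where
  "unitary_on B U \<longleftrightarrow>
     (\<forall>s\<in>B. \<forall>t\<in>B. (\<Sum>r\<in>B. cnj (U r s) * U r t) = (if s = t then 1 else 0))"

definition apply_op :: "qbasis set \<Rightarrow> (qbasis \<Rightarrow> qbasis \<Rightarrow> complex) \<Rightarrow> (qbasis \<Rightarrow> complex) \<Rightarrow> (qbasis \<Rightarrow> complex)" where
  "apply_op B U v = (\<lambda>r. \<Sum>s\<in>B. U r s * v s)"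

(* standard oracle O_X |i,b,w> = |i, b XOR x_i, w> *)
definition oracle_apply :: "bool list \<Rightarrow> (qbasis \<Rightarrow> complex) \<Rightarrow> (qbasis \<Rightarrow> complex)" where
  "oracle_apply X v = (\<lambda>(i, b, w). v (i, b \<noteq> X ! i, w))"

definition init_state :: "qbasis \<Rightarrow> complex" where
  "init_state s = (if s = (0, False, 0) then 1 else 0)"

(* state after U_k O_X U_{k-1} ... O_X U_0 |0> *)
fun qstate :: "qbasis set \<Rightarrow> (nat \<Rightarrow> qbasis \<Rightarrow> qbasis \<Rightarrow> complex) \<Rightarrow> bool list \<Rightarrow> nat \<Rightarrow> (qbasis \<Rightarrow> complex)" where
  "qstate B Us X 0 = apply_op B (Us 0) init_state"
| "qstate B Us X (Suc k) = apply_op B (Us (Suc k)) (oracle_apply X (qstate B Us X k))"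

(* probability that a final measurement in the computational basis lands in Acc (output 1) *)
definition acc_prob :: "qbasis set \<Rightarrow> (qbasis \<Rightarrow> complex) \<Rightarrow> real" where
  "acc_prob Acc v = (\<Sum>s\<in>Acc. (cmod (v s))^2)"

definition quantum_computes :: "nat \<Rightarrow> (bool list \<Rightarrow> bool option) \<Rightarrow> nat \<Rightarrow> bool" where
  "quantum_computes N f T \<longleftrightarrow>
     (\<exists>W Us Acc. W \<ge> 1 \<and> (\<forall>k\<le>T. unitary_on (qspace N W) (Us k)) \<and> Acc \<subseteq> qspace N W \<and>
        (\<forall>X \<in> dom_pf N f.
           (if the (f X) then acc_prob Acc (qstate (qspace N W) Us X T) \<ge> 2/3
            else acc_prob Acc (qstate (qspace N W) Us X T) \<le> 1/3)))"

definition Q_cplx :: "nat \<Rightarrow> (bool list \<Rightarrow> bool option) \<Rightarrow> ennreal" where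
  "Q_cplx N f = (INF T \<in> {T. quantum_computes N f T}. ennreal (real T))"

end

theory Submission
  imports Defs
begin


definition ip :: "qbasis set \<Rightarrow> (qbasis \<Rightarrow> complex) \<Rightarrow> (qbasis \<Rightarrow> complex) \<Rightarrow> complex" where
  "ip B u v = (\<Sum>s\<in>B. cnj (u s) * v s)"

lemma finite_qspace: "finite (qspace N W)"
  by (simp add: qspace_def)

lemma unitary_ip:
  assumes "finite B" "unitary_on B U"
  shows "ip B (apply_op B U u) (apply_op B U v) = ip B u v"
proof -
  have "ip B (apply_op B U u) (apply_op B U v) =
     (\<Sum>r\<in>B. \<Sum>s\<in>B. \<Sum>t\<in>B. cnj (u s) * v t * (cnj (U r s) * U r t))"
    by (simp add: ip_def apply_op_def sum_distrib_left sum_distrib_right mult_ac)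
  also have "\<dots> = (\<Sum>s\<in>B. \<Sum>r\<in>B. \<Sum>t\<in>B. cnj (u s) * v t * (cnj (U r s) * U r t))"
    by (rule sum.swap)
  also have "\<dots> = (\<Sum>s\<in>B. \<Sum>t\<in>B. \<Sum>r\<in>B. cnj (u s) * v t * (cnj (U r s) * U r t))"
    by (rule sum.cong[OF refl], rule sum.swap)
  also have "\<dots> = (\<Sum>s\<in>B. \<Sum>t\<in>B. cnj (u s) * v t * (\<Sum>r\<in>B. cnj (U r s) * U r t))"
    by (simp add: sum_distrib_left)
  also have "\<dots> = (\<Sum>s\<in>B. \<Sum>t\<in>B. cnj (u s) * v t * (if s = t then 1 else 0))"
    using assms(2) unfolding unitary_on_def by (intro sum.cong refl) auto
  also have "\<dots> = ip B u v"
    using assms(1) by (simp add: ip_def if_distrib cong: if_cong)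
  finally show ?thesis .
qed

lemma ip_qspace:
  "ip (qspace N W) u v = (\<Sum>i<N. \<Sum>w<W. cnj (u (i,False,w)) * v (i,False,w) + cnj (u (i,True,w)) * v (i,True,w))"
proof -
  have "ip (qspace N W) u v = (\<Sum>(i,bw)\<in>{0..<N} \<times> (UNIV \<times> {0..<W}). cnj (u (i,bw)) * v (i,bw))"
    by (simp add: ip_def qspace_def)
  also have "\<dots> = (\<Sum>i\<in>{0..<N}. \<Sum>bw\<in>UNIV \<times> {0..<W}. cnj (u (i,bw)) * v (i,bw))"
    by (rule sum.cartesian_product[symmetric])
  also have "\<dots> = (\<Sum>i\<in>{0..<N}. \<Sum>b\<in>UNIV. \<Sum>w\<in>{0..<W}. cnj (u (i,b,w)) * v (i,b,w))"
    by (intro sum.cong refl) (simp add: sum.cartesian_product)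
  also have "\<dots> = (\<Sum>i<N. \<Sum>w<W. cnj (u (i,False,w)) * v (i,False,w) + cnj (u (i,True,w)) * v (i,True,w))"
    by (simp add: UNIV_bool sum.distrib lessThan_atLeast0)
  finally show ?thesis .
qed

lemma amgm2:
  fixes x y a :: real assumes "a > 0"
  shows "2 * x * y \<le> a * x^2 + y^2 / a"
proof -
  have "0 \<le> (a*x - y)^2" by simp
  hence "2*a*x*y \<le> a*(a*x^2) + y^2" by (simp add: power2_eq_square algebra_simps)
  hence "a * (2*x*y) \<le> a * (a * x^2 + y^2 / a)" using assms by (simp add: algebra_simps)
  thus ?thesis using assms by (simp add: mult_le_cancel_left)
qed

lemma cmod_cnj_mult_le:
  fixes z1 z2 :: complex assumes "a > 0"
  shows "cmod (cnj z1 * z2) \<le> (a * (cmod z1)^2 + (cmod z2)^2 / a) / 2"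
  using amgm2[OF assms, of "cmod z1" "cmod z2"] by (simp add: norm_mult)

lemma norm4: fixes a b c d :: complex
  shows "cmod (a + b - (c + d)) \<le> cmod a + cmod b + cmod c + cmod d"
proof -
  have "cmod (a + b - (c + d)) \<le> cmod (a + b) + cmod (c + d)" by (rule norm_triangle_ineq4)
  also have "\<dots> \<le> cmod a + cmod b + (cmod c + cmod d)" by (intro add_mono norm_triangle_ineq)
  finally show ?thesis by simp
qed

definition oracle_nu :: "nat \<Rightarrow> nat \<Rightarrow> (qbasis \<Rightarrow> complex) \<Rightarrow> real" where
  "oracle_nu W i u = (\<Sum>w<W. (cmod (u (i,False,w)))^2 + (cmod (u (i,True,w)))^2)"

lemma oracle_same:
  "ip (qspace N W) (oracle_apply X u) (oracle_apply X v) = ip (qspace N W) u v"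
  unfolding ip_qspace
  apply (intro sum.cong refl)
  subgoal for i w by (cases "X!i") (simp_all add: oracle_apply_def)
  done

lemma oracle_bound:
  assumes a: "a > 0"
  shows "cmod (ip (qspace N W) (oracle_apply X u) (oracle_apply Y v) - ip (qspace N W) u v)
     \<le> (\<Sum>i\<in>{i. i < N \<and> X!i \<noteq> Y!i}. a * oracle_nu W i u + oracle_nu W i v / a)"
proof -
  define D where "D i = (\<Sum>w<W. (cnj (oracle_apply X u (i,False,w)) * oracle_apply Y v (i,False,w)
      + cnj (oracle_apply X u (i,True,w)) * oracle_apply Y v (i,True,w))
      - (cnj (u (i,False,w)) * v (i,False,w) + cnj (u (i,True,w)) * v (i,True,w)))" for i
  have eq: "ip (qspace N W) (oracle_apply X u) (oracle_apply Y v) - ip (qspace N W) u v = (\<Sum>i<N. D i)"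
    unfolding ip_qspace D_def by (simp add: sum_subtractf)
  have D0: "D i = 0" if "X!i = Y!i" for i
    using that unfolding D_def by (cases "Y!i") (auto simp: oracle_apply_def)
  have Db: "cmod (D i) \<le> a * oracle_nu W i u + oracle_nu W i v / a" if "X!i \<noteq> Y!i" for i
  proof -
    have "cmod (D i) \<le> (\<Sum>w<W. cmod (cnj (oracle_apply X u (i,False,w)) * oracle_apply Y v (i,False,w))
      + cmod (cnj (oracle_apply X u (i,True,w)) * oracle_apply Y v (i,True,w))
      + cmod (cnj (u (i,False,w)) * v (i,False,w)) + cmod (cnj (u (i,True,w)) * v (i,True,w)))"
      unfolding D_def
      by (rule order_trans[OF norm_sum sum_mono], rule norm4)
    also have "\<dots> \<le> (\<Sum>w<W. a * ((cmod (u (i,False,w)))^2 + (cmod (u (i,True,w)))^2)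
        + ((cmod (v (i,False,w)))^2 + (cmod (v (i,True,w)))^2) / a)"
    proof (rule sum_mono)
      fix w
      have h: "\<And>z1 z2. cmod (cnj z1 * z2) \<le> (a * (cmod z1)^2 + (cmod z2)^2 / a) / 2"
        using cmod_cnj_mult_le[OF a] by blast
      show "cmod (cnj (oracle_apply X u (i,False,w)) * oracle_apply Y v (i,False,w))
      + cmod (cnj (oracle_apply X u (i,True,w)) * oracle_apply Y v (i,True,w))
      + cmod (cnj (u (i,False,w)) * v (i,False,w)) + cmod (cnj (u (i,True,w)) * v (i,True,w))
         \<le> a * ((cmod (u (i,False,w)))^2 + (cmod (u (i,True,w)))^2)
        + ((cmod (v (i,False,w)))^2 + (cmod (v (i,True,w)))^2) / a"
        using that h[of "u (i,False,w)" "v (i,False,w)"] h[of "u (i,True,w)" "v (i,True,w)"]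
          h[of "u (i,False,w)" "v (i,True,w)"] h[of "u (i,True,w)" "v (i,False,w)"]
        by (cases "X!i"; cases "Y!i"; simp add: oracle_apply_def distrib_left add_divide_distrib; linarith)
    qed
    also have "\<dots> = a * oracle_nu W i u + oracle_nu W i v / a"
      by (simp add: oracle_nu_def sum.distrib sum_distrib_left[symmetric] sum_divide_distrib[symmetric])
    finally show ?thesis .
  qed
  have "cmod (\<Sum>i<N. D i) \<le> (\<Sum>i<N. cmod (D i))" by (rule norm_sum)
  also have "\<dots> = (\<Sum>i\<in>{i. i < N \<and> X!i \<noteq> Y!i}. cmod (D i))"
    by (rule sum.mono_neutral_right) (auto simp: D0)
  also have "\<dots> \<le> (\<Sum>i\<in>{i. i < N \<and> X!i \<noteq> Y!i}. a * oracle_nu W i u + oracle_nu W i v / a)"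
    by (rule sum_mono) (auto intro: Db)
  finally show ?thesis using eq by simp
qed

lemma sum_qspace:
  "(\<Sum>s\<in>qspace N W. h s) = (\<Sum>i<N. \<Sum>w<W. h (i,False,w) + h (i,True,w))"
proof -
  have "(\<Sum>s\<in>qspace N W. h s) = (\<Sum>(i,bw)\<in>{0..<N} \<times> (UNIV \<times> {0..<W}). h (i,bw))"
    by (simp add: qspace_def)
  also have "\<dots> = (\<Sum>i\<in>{0..<N}. \<Sum>bw\<in>UNIV \<times> {0..<W}. h (i,bw))"
    by (rule sum.cartesian_product[symmetric])
  also have "\<dots> = (\<Sum>i\<in>{0..<N}. \<Sum>b\<in>UNIV. \<Sum>w\<in>{0..<W}. h (i,b,w))"
    by (intro sum.cong refl) (simp add: sum.cartesian_product)
  also have "\<dots> = (\<Sum>i<N. \<Sum>w<W. h (i,False,w) + h (i,True,w))"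
    by (simp add: UNIV_bool sum.distrib lessThan_atLeast0)
  finally show ?thesis .
qed

definition nrm :: "qbasis set \<Rightarrow> (qbasis \<Rightarrow> complex) \<Rightarrow> real" where
  "nrm B u = (\<Sum>s\<in>B. (cmod (u s))^2)"

lemma ip_self: "ip B u u = of_real (nrm B u)"
  unfolding ip_def nrm_def of_real_sum by (rule sum.cong[OF refl]) (simp only: complex_norm_square mult.commute)

lemma nrm_qspace: "nrm (qspace N W) u = (\<Sum>i<N. oracle_nu W i u)"
  unfolding nrm_def sum_qspace oracle_nu_def by (simp add: sum.distrib)

lemma ip_swap: "ip B v u = cnj (ip B u v)"
  unfolding ip_def by (simp add: mult.commute)

lemma nrm_eq_ip: "ip B u u = ip B v v \<Longrightarrow> nrm B u = nrm B v"
  by (simp add: ip_self)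

lemma ip_init: "N \<ge> 1 \<Longrightarrow> W \<ge> 1 \<Longrightarrow> ip (qspace N W) init_state init_state = 1"
proof -
  assume "N \<ge> 1" "W \<ge> 1"
  hence mem: "(0,False,0) \<in> qspace N W" by (auto simp: qspace_def)
  have "ip (qspace N W) init_state init_state = (\<Sum>s\<in>qspace N W. if s = (0,False,0) then 1 else 0)"
    unfolding ip_def init_state_def by (intro sum.cong refl) auto
  also have "\<dots> = 1" using mem finite_qspace by simp
  finally show ?thesis .
qed

lemma qstate_ip_step:
  assumes "unitary_on (qspace N W) (Us (Suc k))"
  shows "ip (qspace N W) (qstate (qspace N W) Us X (Suc k)) (qstate (qspace N W) Us Y (Suc k))
       = ip (qspace N W) (oracle_apply X (qstate (qspace N W) Us X k)) (oracle_apply Y (qstate (qspace N W) Us Y k))"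
  using unitary_ip[OF finite_qspace assms] by simp

lemma qstate_ip0:
  assumes "unitary_on (qspace N W) (Us 0)" "N \<ge> 1" "W \<ge> 1"
  shows "ip (qspace N W) (qstate (qspace N W) Us X 0) (qstate (qspace N W) Us Y 0) = 1"
  using unitary_ip[OF finite_qspace assms(1)] ip_init[OF assms(2,3)] by simp

lemma qstate_nrm:
  assumes "\<forall>k\<le>T. unitary_on (qspace N W) (Us k)" "N \<ge> 1" "W \<ge> 1" "k \<le> T"
  shows "nrm (qspace N W) (qstate (qspace N W) Us X k) = 1"
  using assms(4)
proof (induction k)
  case 0
  then show ?case using qstate_ip0[of N W Us X X] assms by (simp add: ip_self)
next
  case (Suc k)
  have "ip (qspace N W) (qstate (qspace N W) Us X (Suc k)) (qstate (qspace N W) Us X (Suc k))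
     = ip (qspace N W) (qstate (qspace N W) Us X k) (qstate (qspace N W) Us X k)"
    using qstate_ip_step[of N W Us k X X] assms(1) Suc.prems oracle_same by simp
  then show ?case using Suc by (simp add: ip_self)
qed

lemma arith1817: fixes p q :: real assumes "2/3 \<le> p" "q \<le> 1/3"
  shows "((2/3) * p + q / (2/3)) / 2 + ((3/2) * (1 - p) + (1 - q) / (3/2)) / 2 \<le> 17/18"
proof -
  have "((2/3) * p + q / (2/3)) / 2 + ((3/2) * (1 - p) + (1 - q) / (3/2)) / 2 = 13/12 - 5/12 * (p - q)"
    by (simp add: field_simps)
  also have "\<dots> \<le> 17/18" using assms by (simp add: algebra_simps)
  finally show ?thesis .
qed

lemma final_bound:
  assumes "finite B" "Acc \<subseteq> B" "nrm B u = 1" "nrm B v = 1"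
    "acc_prob Acc u \<ge> 2/3" "acc_prob Acc v \<le> 1/3"
  shows "cmod (ip B u v) \<le> 17/18"
proof -
  have fA: "finite Acc" using assms(1,2) finite_subset by blast
  have h: "\<And>z1 z2 a. a > 0 \<Longrightarrow> cmod (cnj z1 * z2) \<le> (a * (cmod z1)^2 + (cmod z2)^2 / a) / 2"
    using cmod_cnj_mult_le by blast
  define p where "p = acc_prob Acc u"
  define q where "q = acc_prob Acc v"
  have s1: "(\<Sum>s\<in>B - Acc. (cmod (u s))^2) = 1 - p"
    using assms(1,2,3) unfolding p_def acc_prob_def nrm_def by (simp add: sum_diff[OF assms(1,2)])
  have s2: "(\<Sum>s\<in>B - Acc. (cmod (v s))^2) = 1 - q"
    using assms(1,2,4) unfolding q_def acc_prob_def nrm_def by (simp add: sum_diff[OF assms(1,2)])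
  have eq: "ip B u v = (\<Sum>s\<in>Acc. cnj (u s) * v s) + (\<Sum>s\<in>B - Acc. cnj (u s) * v s)"
    unfolding ip_def using sum.subset_diff[OF assms(2,1)] by (simp add: add.commute)
  have "cmod (ip B u v) \<le> cmod (\<Sum>s\<in>Acc. cnj (u s) * v s) + cmod (\<Sum>s\<in>B - Acc. cnj (u s) * v s)"
    unfolding eq by (rule norm_triangle_ineq)
  also have "\<dots> \<le> (\<Sum>s\<in>Acc. cmod (cnj (u s) * v s)) + (\<Sum>s\<in>B - Acc. cmod (cnj (u s) * v s))"
    by (intro add_mono norm_sum)
  also have "\<dots> \<le> (\<Sum>s\<in>Acc. ((2/3) * (cmod (u s))^2 + (cmod (v s))^2 / (2/3)) / 2)
       + (\<Sum>s\<in>B - Acc. ((3/2) * (cmod (u s))^2 + (cmod (v s))^2 / (3/2)) / 2)"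
    by (intro add_mono sum_mono h) auto
  also have "\<dots> = ((2/3) * p + q / (2/3)) / 2 + ((3/2) * (\<Sum>s\<in>B - Acc. (cmod (u s))^2) + (\<Sum>s\<in>B - Acc. (cmod (v s))^2) / (3/2)) / 2"
    unfolding p_def q_def acc_prob_def
    by (simp add: sum_divide_distrib[symmetric] sum.distrib sum_distrib_left[symmetric] sum_distrib_right[symmetric])
  also have "\<dots> \<le> 17/18" using assms(5,6) unfolding s1 s2 p_def q_def by (rule arith1817)
  finally show ?thesis .
qed



lemma sup_count:
  assumes "finite U" "S \<subseteq> U" "card S \<le> k"
  shows "card {T. T \<subseteq> U \<and> card T = k \<and> S \<subseteq> T} = (card U - card S) choose (k - card S)"
proof -
  have fS: "finite S" using assms(1,2) finite_subset by blast
  have "bij_betw (\<lambda>T. T - S) {T. T \<subseteq> U \<and> card T = k \<and> S \<subseteq> T} {V. V \<subseteq> U - S \<and> card V = k - card S}"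
  proof (rule bij_betw_byWitness[where f'="\<lambda>V. V \<union> S"])
    show "\<forall>T\<in>{T. T \<subseteq> U \<and> card T = k \<and> S \<subseteq> T}. T - S \<union> S = T" by auto
    show "\<forall>V\<in>{V. V \<subseteq> U - S \<and> card V = k - card S}. V \<union> S - S = V" by auto
    show "(\<lambda>T. T - S) ` {T. T \<subseteq> U \<and> card T = k \<and> S \<subseteq> T} \<subseteq> {V. V \<subseteq> U - S \<and> card V = k - card S}"
      using fS by (auto simp: card_Diff_subset)
    show "(\<lambda>V. V \<union> S) ` {V. V \<subseteq> U - S \<and> card V = k - card S} \<subseteq> {T. T \<subseteq> U \<and> card T = k \<and> S \<subseteq> T}"
    proof (rule image_subsetI)
      fix V assume "V \<in> {V. V \<subseteq> U - S \<and> card V = k - card S}"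
      hence V: "V \<subseteq> U - S" "card V = k - card S" by auto
      have fV: "finite V" using V(1) assms(1) finite_subset by blast
      have "card (V \<union> S) = card V + card S" using V(1) fV fS by (intro card_Un_disjoint) auto
      thus "V \<union> S \<in> {T. T \<subseteq> U \<and> card T = k \<and> S \<subseteq> T}" using V assms by auto
    qed
  qed
  hence "card {T. T \<subseteq> U \<and> card T = k \<and> S \<subseteq> T} = card {V. V \<subseteq> U - S \<and> card V = k - card S}"
    by (rule bij_betw_same_card)
  also have "\<dots> = card (U - S) choose (k - card S)" using assms(1) by (intro n_subsets) auto
  also have "card (U - S) = card U - card S" using fS assms(2) by (rule card_Diff_subset)
  finally show ?thesis .
qed

definition Aset :: "nat \<Rightarrow> nat \<Rightarrow> nat set set" where
  "Aset N a = {S. S \<subseteq> {..<N} \<and> card S = a}"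

lemma finite_Aset: "finite (Aset N a)"
  unfolding Aset_def by (rule finite_subset[of _ "Pow {..<N}"]) auto

lemma card_Aset: "card (Aset N a) = N choose a"
  unfolding Aset_def using n_subsets[of "{..<N}" a] by simp

lemma count_up_total:
  assumes "S \<in> Aset N a" "a \<le> b"
  shows "card {Y\<in>Aset N b. S \<subseteq> Y} = (N - a) choose (b - a)"
proof -
  have "{Y\<in>Aset N b. S \<subseteq> Y} = {Y. Y \<subseteq> {..<N} \<and> card Y = b \<and> S \<subseteq> Y}"
    unfolding Aset_def by auto
  thus ?thesis using sup_count[of "{..<N}" S b] assms unfolding Aset_def by auto
qed

lemma count_up:
  assumes "S \<in> Aset N a" "a < b" "i < N"
  shows "card {Y\<in>Aset N b. S \<subseteq> Y \<and> i \<in> Y - S} \<le> (N - a - 1) choose (b - a - 1)"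
proof (cases "i \<in> S")
  case True
  hence "{Y\<in>Aset N b. S \<subseteq> Y \<and> i \<in> Y - S} = {}" by auto
  thus ?thesis by (simp only: card.empty le0)
next
  case False
  have fS: "finite S" using assms(1) unfolding Aset_def using finite_subset by blast
  have cS: "card (insert i S) = a + 1" using False fS assms(1) unfolding Aset_def by simp
  have sub: "insert i S \<subseteq> {..<N}" using assms unfolding Aset_def by auto
  have "{Y\<in>Aset N b. S \<subseteq> Y \<and> i \<in> Y - S} = {Y. Y \<subseteq> {..<N} \<and> card Y = b \<and> insert i S \<subseteq> Y}"
    using False unfolding Aset_def by auto
  hence "card {Y\<in>Aset N b. S \<subseteq> Y \<and> i \<in> Y - S} = (N - (a+1)) choose (b - (a+1))"
    using sup_count[of "{..<N}" "insert i S" b] sub cS assms(2) by simp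
  thus ?thesis by simp
qed

lemma count_down_total:
  assumes "Y \<in> Aset N b"
  shows "card {S\<in>Aset N a. S \<subseteq> Y} = b choose a"
proof -
  have "{S\<in>Aset N a. S \<subseteq> Y} = {S. S \<subseteq> Y \<and> card S = a}"
    using assms unfolding Aset_def by auto
  moreover have "finite Y" using assms unfolding Aset_def using finite_subset by blast
  ultimately show ?thesis using n_subsets[of Y a] assms unfolding Aset_def by simp
qed

lemma count_down:
  assumes "Y \<in> Aset N b"
  shows "card {S\<in>Aset N a. S \<subseteq> Y \<and> i \<in> Y - S} \<le> (b - 1) choose a"
proof (cases "i \<in> Y")
  case False
  hence "{S\<in>Aset N a. S \<subseteq> Y \<and> i \<in> Y - S} = {}" by auto
  thus ?thesis by (simp only: card.empty le0)
next
  case True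
  have fY: "finite Y" using assms unfolding Aset_def using finite_subset by blast
  have "{S\<in>Aset N a. S \<subseteq> Y \<and> i \<in> Y - S} = {S. S \<subseteq> Y - {i} \<and> card S = a}"
    using assms True unfolding Aset_def by auto
  moreover have "card (Y - {i}) = b - 1" using True fY assms unfolding Aset_def by simp
  ultimately show ?thesis using n_subsets[of "Y - {i}" a] fY by simp
qed

lemma count_exchange:
  fixes g :: "nat \<Rightarrow> real"
  assumes "finite C" "\<And>Z. Z \<in> C \<Longrightarrow> P Z \<Longrightarrow> D Z \<subseteq> {..<N}"
  shows "(\<Sum>Z\<in>C. if P Z then (\<Sum>i\<in>D Z. g i) else 0) = (\<Sum>i<N. g i * card {Z\<in>C. P Z \<and> i \<in> D Z})"
proof -
  have "(\<Sum>Z\<in>C. if P Z then (\<Sum>i\<in>D Z. g i) else 0) = (\<Sum>Z\<in>C. \<Sum>i<N. if P Z \<and> i \<in> D Z then g i else 0)"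
  proof (rule sum.cong[OF refl])
    fix Z assume Z: "Z \<in> C"
    show "(if P Z then (\<Sum>i\<in>D Z. g i) else 0) = (\<Sum>i<N. if P Z \<and> i \<in> D Z then g i else 0)"
    proof (cases "P Z")
      case True
      have "(\<Sum>i\<in>D Z. g i) = (\<Sum>i\<in>{..<N} \<inter> D Z. g i)" using assms(2)[OF Z True] by (simp add: Int_absorb1)
      also have "\<dots> = (\<Sum>i<N. if i \<in> D Z then g i else 0)" by (rule sum.inter_restrict) simp
      finally show ?thesis using True by simp
    qed simp
  qed
  also have "\<dots> = (\<Sum>i<N. \<Sum>Z\<in>C. if P Z \<and> i \<in> D Z then g i else 0)" by (rule sum.swap)
  also have "\<dots> = (\<Sum>i<N. g i * card {Z\<in>C. P Z \<and> i \<in> D Z})"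
  proof (rule sum.cong[OF refl])
    fix i
    have "(\<Sum>Z\<in>C. if P Z \<and> i \<in> D Z then g i else 0) = (\<Sum>Z\<in>{Z\<in>C. P Z \<and> i \<in> D Z}. g i)"
      using assms(1) by (rule sum.inter_filter[symmetric])
    thus "(\<Sum>Z\<in>C. if P Z \<and> i \<in> D Z then g i else 0) = g i * card {Z\<in>C. P Z \<and> i \<in> D Z}"
      by simp
  qed
  finally show ?thesis .
qed

lemma sum_if_card:
  assumes "finite C"
  shows "(\<Sum>Z\<in>C. if P Z then (1::real) else 0) = card {Z\<in>C. P Z}"
  using sum.inter_filter[OF assms, of "\<lambda>_. (1::real)" P] by simp



definition lstN :: "nat \<Rightarrow> nat set \<Rightarrow> bool list" where
  "lstN N S = map (\<lambda>i. i \<in> S) [0..<N]"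

lemma lstN_nth: "i < N \<Longrightarrow> lstN N S ! i = (i \<in> S)"
  by (simp add: lstN_def)

lemma length_lstN[simp]: "length (lstN N S) = N"
  by (simp add: lstN_def)

lemma diff_set:
  assumes "S \<subseteq> Y" "Y \<subseteq> {..<N}"
  shows "{i. i < N \<and> lstN N S ! i \<noteq> lstN N Y ! i} = Y - S"
  using assms by (auto simp: lstN_nth)

lemma oracle_nu_nonneg: "oracle_nu W i u \<ge> 0"
  unfolding oracle_nu_def by (intro sum_nonneg) auto

lemma arith_final:
  fixes n b R t g x y :: real
  assumes "n > 0" "b > 0" "R > 0" "t \<ge> 0" "g \<ge> 0"
    "R / 18 \<le> t * ((sqrt n / sqrt b) * x + y / (sqrt n / sqrt b))"
    "x * n = g * R" "y * b = g * R"
  shows "n * b \<le> 1296 * t^2 * g^2"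
proof -
  have sn: "sqrt n > 0" "sqrt b > 0" using assms by auto
  have x: "x = g * R / n" using assms(1,7) by (simp add: field_simps)
  have y: "y = g * R / b" using assms(2,8) by (simp add: field_simps)
  have e: "(sqrt n / sqrt b) * x + y / (sqrt n / sqrt b) = 2 * g * R / (sqrt n * sqrt b)"
  proof -
    have "(sqrt n / sqrt b) * x = g * R / (sqrt n * sqrt b)"
      unfolding x using sn assms(1) by (simp add: field_simps)
    moreover have "y / (sqrt n / sqrt b) = g * R / (sqrt n * sqrt b)"
      unfolding y using sn assms(2) by (simp add: field_simps)
    ultimately show ?thesis by (simp add: mult_ac)
  qed
  have "R / 18 \<le> 2 * t * g * R / (sqrt n * sqrt b)" using assms(6) unfolding e by (simp add: field_simps)
  hence "R * (sqrt n * sqrt b) \<le> 36 * t * g * R" using sn by (simp add: field_simps)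
  hence h: "sqrt n * sqrt b \<le> 36 * t * g" using assms(3) by (simp add: mult.commute mult_le_cancel_left_pos)
  have "n * b = (sqrt n * sqrt b)^2" using assms(1,2) by (simp add: power_mult_distrib)
  also have "\<dots> \<le> (36 * t * g)^2" using h sn by (intro power_mono) auto
  also have "\<dots> = 1296 * t^2 * g^2" by (simp add: power_mult_distrib)
  finally show ?thesis .
qed

context
  fixes N W :: nat and Us :: "nat \<Rightarrow> qbasis \<Rightarrow> qbasis \<Rightarrow> complex" and T :: nat
  assumes unit: "\<forall>k\<le>T. unitary_on (qspace N W) (Us k)" and N1: "N \<ge> 1" and W1: "W \<ge> 1"
begin

definition qs :: "nat set \<Rightarrow> nat \<Rightarrow> qbasis \<Rightarrow> complex" where
  "qs S k = qstate (qspace N W) Us (lstN N S) k"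

definition Fv :: "nat set \<Rightarrow> nat set \<Rightarrow> nat \<Rightarrow> real" where
  "Fv S Y k = cmod (ip (qspace N W) (qs S k) (qs Y k))"

lemma F_step:
  assumes "Suc k \<le> T" "S \<subseteq> Y" "Y \<subseteq> {..<N}" "\<alpha> > 0"
  shows "Fv S Y (Suc k) \<ge> Fv S Y k - (\<Sum>i\<in>Y - S. \<alpha> * oracle_nu W i (qs S k) + oracle_nu W i (qs Y k) / \<alpha>)"
proof -
  have e: "ip (qspace N W) (qs S (Suc k)) (qs Y (Suc k)) =
      ip (qspace N W) (oracle_apply (lstN N S) (qs S k)) (oracle_apply (lstN N Y) (qs Y k))"
    unfolding qs_def using qstate_ip_step unit assms(1) by blast
  have b: "cmod (ip (qspace N W) (oracle_apply (lstN N S) (qs S k)) (oracle_apply (lstN N Y) (qs Y k))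
       - ip (qspace N W) (qs S k) (qs Y k))
     \<le> (\<Sum>i\<in>Y - S. \<alpha> * oracle_nu W i (qs S k) + oracle_nu W i (qs Y k) / \<alpha>)"
    using oracle_bound[OF assms(4), of N W "lstN N S" "qs S k" "lstN N Y" "qs Y k"]
    unfolding diff_set[OF assms(2,3)] .
  have "Fv S Y k - Fv S Y (Suc k) \<le> cmod (ip (qspace N W) (qs S k) (qs Y k) - ip (qspace N W) (qs S (Suc k)) (qs Y (Suc k)))"
    unfolding Fv_def by (rule norm_triangle_ineq2)
  also have "\<dots> = cmod (ip (qspace N W) (qs S (Suc k)) (qs Y (Suc k)) - ip (qspace N W) (qs S k) (qs Y k))"
    by (rule norm_minus_commute)
  finally show ?thesis using b unfolding e by linarith
qed

lemma nu_sum: "k \<le> T \<Longrightarrow> (\<Sum>i<N. oracle_nu W i (qs S k)) = 1"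
  using qstate_nrm[OF unit N1 W1, of k] unfolding qs_def nrm_qspace[symmetric] by blast

lemma Fv_zero: "Fv S Y 0 = 1"
  unfolding Fv_def qs_def using qstate_ip0[of N W Us] unit N1 W1 by simp

lemma FT:
  assumes "Acc \<subseteq> qspace N W" "acc_prob Acc (qs S T) \<ge> 2/3" "acc_prob Acc (qs Y T) \<le> 1/3"
  shows "Fv S Y T \<le> 17/18" "Fv Y S T \<le> 17/18"
proof -
  have n: "nrm (qspace N W) (qs Z T) = 1" for Z using qstate_nrm[OF unit N1 W1, of T] unfolding qs_def by blast
  show "Fv S Y T \<le> 17/18" unfolding Fv_def by (rule final_bound[OF finite_qspace assms(1) n n assms(2,3)])
  thus "Fv Y S T \<le> 17/18" unfolding Fv_def by (subst ip_swap) simp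
qed


lemma adversary:
  assumes ab: "a < b" "b \<le> N" and Acc: "Acc \<subseteq> qspace N W"
    and side: "\<And>S Y. S \<in> Aset N a \<Longrightarrow> Y \<in> Aset N b \<Longrightarrow> Fv S Y T \<le> 17/18"
  shows "real ((N - a) * b) \<le> 1296 * (real T)^2 * (real (b - a))^2"
proof -
  define A where "A = Aset N a"
  define B where "B = Aset N b"
  have fA: "finite A" and fB: "finite B" unfolding A_def B_def by (rule finite_Aset)+
  have subB: "Y \<subseteq> {..<N}" if "Y \<in> B" for Y using that unfolding B_def Aset_def by auto
  define Wf where "Wf k = (\<Sum>S\<in>A. \<Sum>Y\<in>B. if S \<subseteq> Y then Fv S Y k else 0)" for k
  define Rsz where "Rsz = (\<Sum>S\<in>A. \<Sum>Y\<in>B. if S \<subseteq> Y then (1::real) else 0)"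
  define m where "m = (N - a) choose (b - a)"
  define l where "l = (N - a - 1) choose (b - a - 1)"
  define m' where "m' = b choose a"
  define l' where "l' = (b - 1) choose a"
  have R1: "Rsz = card A * m"
  proof -
    have "Rsz = (\<Sum>S\<in>A. real (card {Y\<in>B. S \<subseteq> Y}))" unfolding Rsz_def using sum_if_card[OF fB] by simp
    also have "\<dots> = (\<Sum>S\<in>A. real m)"
      using count_up_total ab unfolding A_def B_def m_def by (intro sum.cong refl) auto
    finally show ?thesis by simp
  qed
  have R2: "Rsz = card B * m'"
  proof -
    have "Rsz = (\<Sum>Y\<in>B. \<Sum>S\<in>A. if S \<subseteq> Y then (1::real) else 0)" unfolding Rsz_def by (rule sum.swap)
    also have "\<dots> = (\<Sum>Y\<in>B. real (card {S\<in>A. S \<subseteq> Y}))" using sum_if_card[OF fA] by simp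
    also have "\<dots> = (\<Sum>Y\<in>B. real m')"
      using count_down_total unfolding A_def B_def m'_def by (intro sum.cong refl) auto
    finally show ?thesis by simp
  qed
  have W0: "Wf 0 = Rsz" unfolding Wf_def Rsz_def by (simp add: Fv_zero cong: if_cong)
  have WT: "Wf T \<le> 17/18 * Rsz"
  proof -
    have "Wf T \<le> (\<Sum>S\<in>A. \<Sum>Y\<in>B. if S \<subseteq> Y then 17/18 else 0)"
      unfolding Wf_def using side unfolding A_def B_def by (intro sum_mono) auto
    also have "\<dots> = 17/18 * Rsz" unfolding Rsz_def by (simp add: sum_distrib_left if_distrib cong: if_cong)
    finally show ?thesis .
  qed
  have step: "Wf (Suc k) \<ge> Wf k - (\<alpha> * (real l * real (card A)) + (real l' * real (card B)) / \<alpha>)" if k: "Suc k \<le> T" and al: "\<alpha> > 0" for k and \<alpha> :: real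
  proof -
    define E1 where "E1 = (\<Sum>S\<in>A. \<Sum>Y\<in>B. if S \<subseteq> Y then (\<Sum>i\<in>Y - S. oracle_nu W i (qs S k)) else 0)"
    define E2 where "E2 = (\<Sum>S\<in>A. \<Sum>Y\<in>B. if S \<subseteq> Y then (\<Sum>i\<in>Y - S. oracle_nu W i (qs Y k)) else 0)"
    have "Wf k - \<alpha> * E1 - E2 / \<alpha> = (\<Sum>S\<in>A. \<Sum>Y\<in>B. (if S \<subseteq> Y then Fv S Y k else 0)
         - \<alpha> * (if S \<subseteq> Y then (\<Sum>i\<in>Y - S. oracle_nu W i (qs S k)) else 0)
         - (if S \<subseteq> Y then (\<Sum>i\<in>Y - S. oracle_nu W i (qs Y k)) else 0) / \<alpha>)"
      unfolding Wf_def E1_def E2_def by (simp add: sum_subtractf sum_distrib_left sum_divide_distrib)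
    also have "\<dots> \<le> Wf (Suc k)"
      unfolding Wf_def
    proof (intro sum_mono)
      fix S Y assume S: "S \<in> A" and Y: "Y \<in> B"
      show "(if S \<subseteq> Y then Fv S Y k else 0)
         - \<alpha> * (if S \<subseteq> Y then (\<Sum>i\<in>Y - S. oracle_nu W i (qs S k)) else 0)
         - (if S \<subseteq> Y then (\<Sum>i\<in>Y - S. oracle_nu W i (qs Y k)) else 0) / \<alpha>
         \<le> (if S \<subseteq> Y then Fv S Y (Suc k) else 0)"
      proof (cases "S \<subseteq> Y")
        case True
        have "Fv S Y (Suc k) \<ge> Fv S Y k - (\<Sum>i\<in>Y - S. \<alpha> * oracle_nu W i (qs S k) + oracle_nu W i (qs Y k) / \<alpha>)"
          by (rule F_step[OF k True subB[OF Y] al])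
        thus ?thesis using True by (simp add: sum.distrib sum_distrib_left sum_divide_distrib)
      qed simp
    qed
    finally have main: "Wf k - \<alpha> * E1 - E2 / \<alpha> \<le> Wf (Suc k)" .
    have E1b: "E1 \<le> real l * real (card A)"
    proof -
      have "E1 = (\<Sum>S\<in>A. \<Sum>i<N. oracle_nu W i (qs S k) * card {Y\<in>B. S \<subseteq> Y \<and> i \<in> Y - S})"
        unfolding E1_def
        by (intro sum.cong refl count_exchange[OF fB]) (use subB in auto)
      also have "\<dots> \<le> (\<Sum>S\<in>A. \<Sum>i<N. oracle_nu W i (qs S k) * l)"
      proof (intro sum_mono mult_left_mono oracle_nu_nonneg)
        fix S i assume "S \<in> A" "i \<in> {..<N}"
        thus "real (card {Y\<in>B. S \<subseteq> Y \<and> i \<in> Y - S}) \<le> real l"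
          using count_up[of S N a b i] ab unfolding A_def B_def l_def by auto
      qed
      also have "\<dots> = (\<Sum>S\<in>A. real l)"
        using nu_sum k by (simp add: sum_distrib_right[symmetric])
      finally show ?thesis by (simp add: mult.commute)
    qed
    have E2b: "E2 \<le> real l' * real (card B)"
    proof -
      have "E2 = (\<Sum>Y\<in>B. \<Sum>S\<in>A. if S \<subseteq> Y then (\<Sum>i\<in>Y - S. oracle_nu W i (qs Y k)) else 0)"
        unfolding E2_def by (rule sum.swap)
      also have "\<dots> = (\<Sum>Y\<in>B. \<Sum>i<N. oracle_nu W i (qs Y k) * card {S\<in>A. S \<subseteq> Y \<and> i \<in> Y - S})"
        by (intro sum.cong refl count_exchange[OF fA]) (use subB in auto)
      also have "\<dots> \<le> (\<Sum>Y\<in>B. \<Sum>i<N. oracle_nu W i (qs Y k) * l')"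
      proof (intro sum_mono mult_left_mono oracle_nu_nonneg)
        fix Y i assume "Y \<in> B" "i \<in> {..<N}"
        thus "real (card {S\<in>A. S \<subseteq> Y \<and> i \<in> Y - S}) \<le> real l'"
          using count_down[of Y N b a i] unfolding A_def B_def l'_def by auto
      qed
      also have "\<dots> = (\<Sum>Y\<in>B. real l')"
        using nu_sum k by (simp add: sum_distrib_right[symmetric])
      finally show ?thesis by (simp add: mult.commute)
    qed
    have "\<alpha> * E1 \<le> \<alpha> * (real l * real (card A))" using E1b al by simp
    moreover have "E2 / \<alpha> \<le> (real l' * real (card B)) / \<alpha>" using E2b al by (simp add: divide_right_mono)
    ultimately show ?thesis using main by linarith
  qed
  define \<alpha> where "\<alpha> = sqrt (real (N - a)) / sqrt (real b)"
  have al: "\<alpha> > 0" unfolding \<alpha>_def using ab by auto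
  define c where "c = \<alpha> * (real l * real (card A)) + (real l' * real (card B)) / \<alpha>"
  have ind: "k \<le> T \<Longrightarrow> Wf k \<ge> Rsz - k * c" for k
  proof (induction k)
    case 0 then show ?case using W0 by simp
  next
    case (Suc k)
    then have "Wf (Suc k) \<ge> Wf k - c" using step[of k \<alpha>] al unfolding c_def by simp
    then show ?case using Suc by (simp add: algebra_simps)
  qed
  have "Rsz - T * c \<le> 17/18 * Rsz" using ind[of T] WT by simp
  hence key: "Rsz / 18 \<le> T * c" by simp
  have Ane: "{..<a} \<in> A" unfolding A_def Aset_def using ab by auto
  have cA: "card A \<ge> 1" using fA Ane by (metis One_nat_def Suc_leI card_gt_0_iff empty_iff)
  have m1: "m \<ge> 1" unfolding m_def using ab by (simp add: Suc_leI)
  have Rpos: "Rsz > 0" unfolding R1 using cA m1 by simp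
  have g1: "(b - a) * m = (N - a) * l"
  proof -
    have e: "Suc (b - a - 1) = b - a" using ab by simp
    show ?thesis using binomial_absorption[of "b - a - 1" "N - a"] unfolding e m_def l_def .
  qed
  have g2: "(b - a) * m' = b * l'"
    unfolding m'_def l'_def by (rule binomial_absorb_comp)
  have x: "(real l * real (card A)) * real (N - a) = real (b - a) * Rsz"
  proof -
    have g1r: "real (b - a) * real m = real (N - a) * real l" using g1 by (metis of_nat_mult)
    have "(real l * real (card A)) * real (N - a) = real (card A) * (real (N - a) * real l)" by (simp add: mult_ac)
    also have "\<dots> = real (card A) * (real (b - a) * real m)" using g1r by simp
    also have "\<dots> = real (b - a) * Rsz" unfolding R1 by (simp add: mult_ac)
    finally show ?thesis .
  qed
  have y: "(real l' * real (card B)) * real b = real (b - a) * Rsz"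
  proof -
    have g2r: "real (b - a) * real m' = real b * real l'" using g2 by (metis of_nat_mult)
    have "(real l' * real (card B)) * real b = real (card B) * (real b * real l')" by (simp add: mult_ac)
    also have "\<dots> = real (card B) * (real (b - a) * real m')" using g2r by simp
    also have "\<dots> = real (b - a) * Rsz" unfolding R2 by (simp add: mult_ac)
    finally show ?thesis .
  qed
  have "real (N - a) * real b \<le> 1296 * (real T)^2 * (real (b - a))^2"
    by (rule arith_final[OF _ _ Rpos _ _ _ x y]) (use ab key in \<open>auto simp: c_def \<alpha>_def\<close>)
  thus ?thesis by simp
qed

end



lemma hw_lstN: "S \<subseteq> {..<N} \<Longrightarrow> hamming_weight (lstN N S) = card S"
proof -
  assume S: "S \<subseteq> {..<N}"
  have "hamming_weight (lstN N S) = length (filter (\<lambda>i. i \<in> S) [0..<N])"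
    by (simp add: hamming_weight_def lstN_def filter_map o_def)
  also have "\<dots> = card (set (filter (\<lambda>i. i \<in> S) [0..<N]))"
    by (rule distinct_card[symmetric]) simp
  also have "set (filter (\<lambda>i. i \<in> S) [0..<N]) = S" using S by auto
  finally show ?thesis .
qed


lemma hw_le: "hamming_weight X \<le> length X"
  by (simp add: hamming_weight_def)

lemma Q_lower:
  assumes sym: "symmetric_pf N f" and qc: "quantum_computes N f T"
    and X: "length X = N" "f X = Some vx" and Y: "length Y = N" "f Y = Some vy" and ne: "vx \<noteq> vy"
    and lt: "hamming_weight X < hamming_weight Y"
  shows "real ((N - hamming_weight X) * hamming_weight Y)
      \<le> 1296 * (real T)^2 * (real (hamming_weight Y - hamming_weight X))^2"
proof -
  define a where "a = hamming_weight X"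
  define b where "b = hamming_weight Y"
  have ab: "a < b" "b \<le> N" using lt hw_le[of Y] Y unfolding a_def b_def by auto
  have N1: "N \<ge> 1" using ab by simp
  obtain W Us Acc where W1: "W \<ge> 1" and unit: "\<forall>k\<le>T. unitary_on (qspace N W) (Us k)"
    and Acc: "Acc \<subseteq> qspace N W"
    and acc: "\<forall>Z \<in> dom_pf N f. (if the (f Z) then acc_prob Acc (qstate (qspace N W) Us Z T) \<ge> 2/3
            else acc_prob Acc (qstate (qspace N W) Us Z T) \<le> 1/3)"
    using qc unfolding quantum_computes_def by blast
  have fS: "f (lstN N S) = Some vx" if "S \<in> Aset N a" for S
  proof -
    have "hamming_weight (lstN N S) = hamming_weight X"
      using that hw_lstN unfolding Aset_def a_def by auto
    thus ?thesis using sym X unfolding symmetric_pf_def by (metis length_lstN)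
  qed
  have fY: "f (lstN N S) = Some vy" if "S \<in> Aset N b" for S
  proof -
    have "hamming_weight (lstN N S) = hamming_weight Y"
      using that hw_lstN unfolding Aset_def b_def by auto
    thus ?thesis using sym Y unfolding symmetric_pf_def by (metis length_lstN)
  qed
  have accS: "if vx then acc_prob Acc (qs N W Us S T) \<ge> 2/3 else acc_prob Acc (qs N W Us S T) \<le> 1/3"
    if "S \<in> Aset N a" for S
  proof -
    have "lstN N S \<in> dom_pf N f" using fS[OF that] unfolding dom_pf_def by simp
    hence "if the (f (lstN N S)) then acc_prob Acc (qstate (qspace N W) Us (lstN N S) T) \<ge> 2/3
            else acc_prob Acc (qstate (qspace N W) Us (lstN N S) T) \<le> 1/3" using acc by blast
    thus ?thesis using fS[OF that] by (cases vx; cases vy) (simp_all add: qs_def[OF unit N1 W1])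
  qed
  have accY: "if vy then acc_prob Acc (qs N W Us S T) \<ge> 2/3 else acc_prob Acc (qs N W Us S T) \<le> 1/3"
    if "S \<in> Aset N b" for S
  proof -
    have "lstN N S \<in> dom_pf N f" using fY[OF that] unfolding dom_pf_def by simp
    hence "if the (f (lstN N S)) then acc_prob Acc (qstate (qspace N W) Us (lstN N S) T) \<ge> 2/3
            else acc_prob Acc (qstate (qspace N W) Us (lstN N S) T) \<le> 1/3" using acc by blast
    thus ?thesis using fY[OF that] by (cases vx; cases vy) (simp_all add: qs_def[OF unit N1 W1])
  qed
  have side: "Fv N W Us S Y' T \<le> 17/18" if "S \<in> Aset N a" "Y' \<in> Aset N b" for S Y'
  proof (cases vx)
    case True
    then have "\<not> vy" using ne by simp
    then show ?thesis using FT(1)[OF unit N1 W1 Acc] accS[OF that(1)] accY[OF that(2)] True by simp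
  next
    case False
    then have "vy" using ne by simp
    then show ?thesis using FT(2)[OF unit N1 W1 Acc, of Y' S] accS[OF that(1)] accY[OF that(2)] False by simp
  qed
  show ?thesis using adversary[OF unit N1 W1 ab Acc side] unfolding a_def b_def by simp
qed



definition Ls :: "nat \<Rightarrow> nat \<Rightarrow> nat list set" where
  "Ls N K = {xs. set xs \<subseteq> {..<N} \<and> length xs = K}"

definition cnt :: "bool list \<Rightarrow> nat list \<Rightarrow> nat" where
  "cnt X xs = length (filter (\<lambda>i. X!i) xs)"

lemma finite_Ls: "finite (Ls N K)"
  unfolding Ls_def by (rule finite_lists_length_eq) simp

lemma card_Ls: "card (Ls N K) = N ^ K"
  unfolding Ls_def using card_lists_length_eq[of "{..<N}" K] by simp

lemma sum_Ls_Suc: "(\<Sum>xs\<in>Ls N (Suc K). h xs) = (\<Sum>i<N. \<Sum>xs\<in>Ls N K. h (i#xs))"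
proof -
  have "Ls N (Suc K) = (\<lambda>(xs, n). n#xs) ` (Ls N K \<times> {..<N})"
    unfolding Ls_def by (rule lists_length_Suc_eq)
  hence "(\<Sum>xs\<in>Ls N (Suc K). h xs) = sum h ((\<lambda>(xs, n). n#xs) ` (Ls N K \<times> {..<N}))" by simp
  also have "\<dots> = sum (h \<circ> (\<lambda>(xs, n). n#xs)) (Ls N K \<times> {..<N})" by (rule sum.reindex[OF inj_split_Cons])
  also have "\<dots> = (\<Sum>(xs,n)\<in>Ls N K \<times> {..<N}. h (n#xs))" by (rule sum.cong) auto
  also have "\<dots> = (\<Sum>xs\<in>Ls N K. \<Sum>i<N. h (i#xs))"
    by (rule sum.cartesian_product[symmetric])
  also have "\<dots> = (\<Sum>i<N. \<Sum>xs\<in>Ls N K. h (i#xs))" by (rule sum.swap)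
  finally show ?thesis .
qed

lemma cnt_Cons: "real (cnt X (i#xs)) = (if X!i then 1 else 0) + real (cnt X xs)"
  by (simp add: cnt_def)

lemma moments:
  fixes X :: "bool list" and N :: nat
  defines "wX \<equiv> (\<Sum>i<N. if X!i then 1 else 0 :: real)"
  assumes N: "N > 0"
  shows "(\<Sum>xs\<in>Ls N K. real (cnt X xs)) = real K * (wX / N) * real N ^ K
    \<and> (\<Sum>xs\<in>Ls N K. (real (cnt X xs))^2) = real N ^ K * (real K * (wX / N) + real K * (real K - 1) * (wX / N)^2)"
proof (induction K)
  case 0
  have "Ls N 0 = {[]}" unfolding Ls_def by auto
  then show ?case by (simp add: cnt_def)
next
  case (Suc K)
  define p where "p = wX / N"
  define b where "b i = (if X!i then 1 else 0 :: real)" for i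
  have b2: "b i * b i = b i" for i unfolding b_def by simp
  have wp: "(\<Sum>i<N. b i) = p * N" unfolding p_def b_def wX_def using N by simp
  have wp2: "(\<Sum>i<N. 2 * b i) = 2 * (p * N)" using wp by (simp add: sum_distrib_left[symmetric])
  have Z: "(\<Sum>xs\<in>Ls N K. (1::real)) = real N ^ K" using card_Ls by simp
  have IH1: "(\<Sum>xs\<in>Ls N K. real (cnt X xs)) = real K * p * real N ^ K" using Suc.IH p_def by simp
  have IH2: "(\<Sum>xs\<in>Ls N K. (real (cnt X xs))^2) = real N ^ K * (real K * p + real K * (real K - 1) * p^2)"
    using Suc.IH p_def by simp
  have s1: "(\<Sum>xs\<in>Ls N (Suc K). real (cnt X xs)) = (\<Sum>i<N. \<Sum>xs\<in>Ls N K. b i + real (cnt X xs))"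
    unfolding sum_Ls_Suc cnt_Cons b_def ..
  also have "\<dots> = (\<Sum>i<N. b i * real N ^ K + real K * p * real N ^ K)"
    by (simp add: sum.distrib IH1 card_Ls mult.commute)
  also have "\<dots> = p * N * real N ^ K + N * (real K * p * real N ^ K)"
    by (simp add: sum.distrib sum_distrib_right[symmetric] wp)
  also have "\<dots> = real (Suc K) * p * real N ^ Suc K" by (simp add: algebra_simps)
  finally have A: "(\<Sum>xs\<in>Ls N (Suc K). real (cnt X xs)) = real (Suc K) * p * real N ^ Suc K" .
  have "(\<Sum>xs\<in>Ls N (Suc K). (real (cnt X xs))^2) = (\<Sum>i<N. \<Sum>xs\<in>Ls N K. (b i + real (cnt X xs))^2)"
    unfolding sum_Ls_Suc cnt_Cons b_def ..
  also have "\<dots> = (\<Sum>i<N. \<Sum>xs\<in>Ls N K. b i + 2 * b i * real (cnt X xs) + (real (cnt X xs))^2)"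
    by (intro sum.cong refl) (simp add: power2_eq_square algebra_simps b2)
  also have "\<dots> = (\<Sum>i<N. b i * real N ^ K + 2 * b i * (real K * p * real N ^ K)
        + real N ^ K * (real K * p + real K * (real K - 1) * p^2))"
    by (simp add: sum.distrib IH1 IH2 card_Ls sum_distrib_left[symmetric] sum_distrib_right[symmetric] mult.commute)
  also have "\<dots> = p * N * real N ^ K + 2 * (p * N) * (real K * p * real N ^ K)
        + N * (real N ^ K * (real K * p + real K * (real K - 1) * p^2))"
    by (simp add: sum.distrib sum_distrib_right[symmetric] wp wp2)
  also have "\<dots> = real N ^ Suc K * (real (Suc K) * p + real (Suc K) * (real (Suc K) - 1) * p^2)"
    by (simp add: algebra_simps power2_eq_square)
  finally show ?case using A p_def by simp
qed

lemma wX_hw: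
  assumes "length X = N"
  shows "(\<Sum>i<N. if X!i then 1 else 0 :: real) = real (hamming_weight X)"
proof -
  have "(\<Sum>i<N. if X!i then 1 else 0 :: real) = real (card {i\<in>{..<N}. X!i})"
    using sum_if_card[of "{..<N}" "\<lambda>i. X!i"] by simp
  also have "{i\<in>{..<N}. X!i} = {i. i < length X \<and> id (X!i)}" using assms by auto
  also have "card \<dots> = hamming_weight X" unfolding hamming_weight_def by (rule length_filter_conv_card[symmetric])
  finally show ?thesis .
qed

lemma var_sum:
  assumes "length X = N" "N > 0"
  defines "p \<equiv> real (hamming_weight X) / real N"
  shows "(\<Sum>xs\<in>Ls N K. (real (cnt X xs) - real K * p)^2) = real N ^ K * real K * p * (1 - p)"
proof -
  have m: "(\<Sum>xs\<in>Ls N K. real (cnt X xs)) = real K * p * real N ^ K"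
     "(\<Sum>xs\<in>Ls N K. (real (cnt X xs))^2) = real N ^ K * (real K * p + real K * (real K - 1) * p^2)"
    using moments[OF assms(2), of X K] unfolding wX_hw[OF assms(1)] p_def by auto
  have "(\<Sum>xs\<in>Ls N K. (real (cnt X xs) - real K * p)^2)
     = (\<Sum>xs\<in>Ls N K. (real (cnt X xs))^2 - 2 * (real K * p) * real (cnt X xs) + (real K * p)^2)"
    by (intro sum.cong refl) (simp add: power2_eq_square algebra_simps)
  also have "\<dots> = (\<Sum>xs\<in>Ls N K. (real (cnt X xs))^2) - 2 * (real K * p) * (\<Sum>xs\<in>Ls N K. real (cnt X xs))
      + (real K * p)^2 * card (Ls N K)"
    by (simp add: sum.distrib sum_subtractf sum_distrib_left)
  also have "\<dots> = real N ^ K * real K * p * (1 - p)"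
    unfolding m card_Ls by (simp add: power2_eq_square algebra_simps)
  finally show ?thesis .
qed

lemma cheb_count:
  fixes g :: "nat list \<Rightarrow> real"
  assumes "r > 0"
  shows "real (card {xs\<in>Ls N K. \<bar>g xs\<bar> \<ge> r}) * r^2 \<le> (\<Sum>xs\<in>Ls N K. (g xs)^2)"
proof -
  have "real (card {xs\<in>Ls N K. \<bar>g xs\<bar> \<ge> r}) * r^2 = (\<Sum>xs\<in>{xs\<in>Ls N K. \<bar>g xs\<bar> \<ge> r}. r^2)"
    by simp
  also have "\<dots> \<le> (\<Sum>xs\<in>{xs\<in>Ls N K. \<bar>g xs\<bar> \<ge> r}. (g xs)^2)"
  proof (rule sum_mono)
    fix xs assume "xs \<in> {xs\<in>Ls N K. \<bar>g xs\<bar> \<ge> r}"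
    hence "r \<le> \<bar>g xs\<bar>" by simp
    hence "r^2 \<le> \<bar>g xs\<bar>^2" using assms by (intro power_mono) auto
    thus "r^2 \<le> (g xs)^2" by simp
  qed
  also have "\<dots> \<le> (\<Sum>xs\<in>Ls N K. (g xs)^2)"
    by (rule sum_mono2[OF finite_Ls]) auto
  finally show ?thesis .
qed



fun mk :: "(nat \<Rightarrow> bool) \<Rightarrow> nat list \<Rightarrow> nat \<Rightarrow> dtree" where
  "mk dec [] c = Leaf (dec c)"
| "mk dec (i#xs) c = Query i (mk dec xs c) (mk dec xs (Suc c))"

lemma eval_mk: "eval_tree (mk dec xs c) X = dec (c + cnt X xs)"
  by (induction xs arbitrary: c) (auto simp: cnt_def)

lemma nq_mk: "nqueries (mk dec xs c) X = length xs"
  by (induction xs arbitrary: c) auto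

lemma valid_mk: "set xs \<subseteq> {..<N} \<Longrightarrow> valid_tree N (mk dec xs c)"
  by (induction xs arbitrary: c) auto

lemma alg_bound:
  assumes N: "N > 0"
    and good: "\<And>X. X \<in> dom_pf N f \<Longrightarrow> real (card {xs\<in>Ls N K. dec (cnt X xs) \<noteq> the (f X)}) \<le> real N ^ K / 3"
  shows "R_cplx N f \<le> ennreal (real K)"
proof -
  define L where "L = Ls N K"
  have fL: "finite L" unfolding L_def by (rule finite_Ls)
  have "replicate K 0 \<in> L" unfolding L_def Ls_def using N by auto
  hence neL: "L \<noteq> {}" by auto
  have cL: "real (card L) = real N ^ K" unfolding L_def card_Ls by simp
  define P where "P = map_pmf (\<lambda>xs. mk dec xs 0) (pmf_of_set L)"
  have setP: "set_pmf P = (\<lambda>xs. mk dec xs 0) ` L" unfolding P_def using fL neL by simp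
  have corr: "rand_alg_correct N f P"
    unfolding rand_alg_correct_def
  proof safe
    fix t assume "t \<in> set_pmf P"
    then show "valid_tree N t" unfolding setP L_def Ls_def by (auto intro: valid_mk)
  next
    fix X assume X: "X \<in> dom_pf N f"
    have "measure_pmf.prob P {t. eval_tree t X = the (f X)}
        = measure_pmf.prob (pmf_of_set L) {xs. dec (cnt X xs) = the (f X)}"
      unfolding P_def by (simp add: eval_mk vimage_def)
    also have "\<dots> = real (card (L \<inter> {xs. dec (cnt X xs) = the (f X)})) / card L"
      using fL neL by (simp add: measure_pmf_of_set)
    also have "card (L \<inter> {xs. dec (cnt X xs) = the (f X)}) = card L - card {xs\<in>L. dec (cnt X xs) \<noteq> the (f X)}"
    proof -
      have "L \<inter> {xs. dec (cnt X xs) = the (f X)} = L - {xs\<in>L. dec (cnt X xs) \<noteq> the (f X)}" by auto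
      thus ?thesis using fL by (simp add: card_Diff_subset)
    qed
    finally have e: "measure_pmf.prob P {t. eval_tree t X = the (f X)}
       = real (card L - card {xs\<in>L. dec (cnt X xs) \<noteq> the (f X)}) / card L" .
    have le: "card {xs\<in>L. dec (cnt X xs) \<noteq> the (f X)} \<le> card L" using fL by (intro card_mono) auto
    have b: "real (card {xs\<in>L. dec (cnt X xs) \<noteq> the (f X)}) \<le> real (card L) / 3"
      using good[OF X] unfolding L_def[symmetric] cL .
    have pos: "real (card L) > 0" using fL neL by (simp add: card_gt_0_iff)
    show "2/3 \<le> measure_pmf.prob P {t. eval_tree t X = the (f X)}"
      unfolding e using b pos le by (simp add: of_nat_diff field_simps)
  qed
  have cost: "rand_alg_cost N f P \<le> ennreal (real K)"
    unfolding rand_alg_cost_def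
  proof (rule SUP_least)
    fix X
    have "(\<integral>\<^sup>+ t. ennreal (real (nqueries t X)) \<partial>measure_pmf P)
        = (\<integral>\<^sup>+ xs. ennreal (real (length xs)) \<partial>measure_pmf (pmf_of_set L))"
      unfolding P_def by (simp add: nq_mk)
    also have "\<dots> = (\<integral>\<^sup>+ xs. ennreal (real K) \<partial>measure_pmf (pmf_of_set L))"
      using fL neL by (intro nn_integral_cong_AE) (auto simp: AE_measure_pmf_iff L_def Ls_def)
    also have "\<dots> = ennreal (real K)"
      using fL neL by (simp add: measure_pmf.emeasure_space_1)
    finally show "(\<integral>\<^sup>+ t. ennreal (real (nqueries t X)) \<partial>measure_pmf P) \<le> ennreal (real K)" by simp
  qed
  have "R_cplx N f \<le> rand_alg_cost N f P"
    unfolding R_cplx_def using corr by (intro INF_lower) simp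
  thus ?thesis using cost by (rule order_trans)
qed



definition Dv :: "nat \<Rightarrow> (bool list \<Rightarrow> bool option) \<Rightarrow> bool \<Rightarrow> nat set" where
  "Dv N f v = {w. \<exists>X. length X = N \<and> hamming_weight X = w \<and> f X = Some v}"

definition dec :: "nat \<Rightarrow> (bool list \<Rightarrow> bool option) \<Rightarrow> nat \<Rightarrow> nat \<Rightarrow> bool" where
  "dec N f K c = (\<exists>w1\<in>Dv N f True. \<forall>w0\<in>Dv N f False.
      \<bar>real N * real c / real K - real w1\<bar> < \<bar>real N * real c / real K - real w0\<bar>)"

lemma finite_Dv: "finite (Dv N f v)"
  by (rule finite_subset[of _ "{..N}"]) (auto simp: Dv_def hw_le)

lemma Dv_disj:
  assumes "symmetric_pf N f" "w \<in> Dv N f v" "w' \<in> Dv N f (\<not> v)"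
  shows "w \<noteq> w'"
proof
  assume eq: "w = w'"
  obtain X1 where X1: "length X1 = N" "hamming_weight X1 = w" "f X1 = Some v" using assms(2) unfolding Dv_def by blast
  obtain X2 where X2: "length X2 = N" "hamming_weight X2 = w'" "f X2 = Some (\<not> v)" using assms(3) unfolding Dv_def by blast
  have "f X1 = f X2" using assms(1) X1 X2 eq unfolding symmetric_pf_def by metis
  thus False using X1 X2 by simp
qed

lemma arith_cheb:
  fixes cb K0 NK w Nn d :: real
  assumes "K0 > 0" "Nn > 0" "d > 0" "NK \<ge> 0"
    "cb * (K0 * d / (2 * Nn))^2 \<le> NK * K0 * (w / Nn) * (1 - w / Nn)"
    "12 * (w * (Nn - w)) \<le> K0 * d^2"
  shows "cb \<le> NK / 3"
proof -
  have e1: "(K0 * d / (2 * Nn))^2 = K0^2 * d^2 / (4 * Nn^2)" by (simp add: power_divide power_mult_distrib)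
  have e2: "NK * K0 * (w / Nn) * (1 - w / Nn) = NK * K0 * (w * (Nn - w)) / Nn^2"
    using assms(2) by (simp add: field_simps power2_eq_square)
  have "cb * (K0^2 * d^2) \<le> 4 * (NK * K0 * (w * (Nn - w)))"
    using assms(5) unfolding e1 e2 using assms(2) by (simp add: field_simps)
  also have "\<dots> \<le> 4 * (NK * K0 * (K0 * d^2 / 12))"
    using assms(1,4,6) by (intro mult_left_mono) (auto simp: field_simps)
  also have "\<dots> = (NK / 3) * (K0^2 * d^2)" by (simp add: power2_eq_square field_simps)
  finally show ?thesis using assms(1,3) by (simp add: mult_le_cancel_right_pos)
qed

lemma dec_correct:
  assumes sym: "symmetric_pf N f" and X: "length X = N" "f X = Some v" and N: "N > 0" and K: "K > 0"
    and Kb: "\<And>w'. w' \<in> Dv N f (\<not> v) \<Longrightarrow>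
       12 * (real (hamming_weight X) * (real N - real (hamming_weight X))) \<le> real K * (real (hamming_weight X) - real w')^2"
  shows "real (card {xs\<in>Ls N K. dec N f K (cnt X xs) \<noteq> v}) \<le> real N ^ K / 3"
proof (cases "Dv N f (\<not> v) = {}")
  case True
  have w: "hamming_weight X \<in> Dv N f v" using X unfolding Dv_def by auto
  have "dec N f K c = v" for c
    using True w unfolding dec_def by (cases v) auto
  hence "{xs\<in>Ls N K. dec N f K (cnt X xs) \<noteq> v} = {}" by auto
  hence "card {xs\<in>Ls N K. dec N f K (cnt X xs) \<noteq> v} = 0" by (metis card.empty)
  thus ?thesis by simp
next
  case False
  define w where "w = hamming_weight X"
  have wD: "w \<in> Dv N f v" using X unfolding Dv_def w_def by auto
  have wN: "w \<le> N" using X hw_le unfolding w_def by metis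
  define dd where "dd = (\<lambda>w'. \<bar>real w - real w'\<bar>) ` Dv N f (\<not> v)"
  have fdd: "finite dd" "dd \<noteq> {}" unfolding dd_def using finite_Dv False by auto
  define d where "d = Min dd"
  have dle: "d \<le> \<bar>real w - real w'\<bar>" if "w' \<in> Dv N f (\<not> v)" for w'
    unfolding d_def dd_def using fdd that by (intro Min_le) (auto simp: dd_def)
  obtain w'' where w'': "w'' \<in> Dv N f (\<not> v)" "d = \<bar>real w - real w''\<bar>"
    using Min_in[OF fdd] unfolding d_def dd_def by auto
  have dpos: "d > 0" using w'' Dv_disj[OF sym wD w''(1)] by auto
  have Kd: "12 * (real w * (real N - real w)) \<le> real K * d^2"
    using Kb[OF w''(1)] w''(2) unfolding w_def by (simp add: power2_abs)
  define p where "p = real w / real N"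
  define r where "r = real K * d / (2 * real N)"
  have rpos: "r > 0" unfolding r_def using K N dpos by auto
  have sub: "{xs\<in>Ls N K. dec N f K (cnt X xs) \<noteq> v} \<subseteq> {xs\<in>Ls N K. \<bar>real (cnt X xs) - real K * p\<bar> \<ge> r}"
  proof (rule subsetI)
    fix xs assume "xs \<in> {xs\<in>Ls N K. dec N f K (cnt X xs) \<noteq> v}"
    hence xs: "xs \<in> Ls N K" "dec N f K (cnt X xs) \<noteq> v" by auto
    have "r \<le> \<bar>real (cnt X xs) - real K * p\<bar>"
    proof (rule ccontr)
      assume "\<not> r \<le> \<bar>real (cnt X xs) - real K * p\<bar>"
      hence lt: "\<bar>real (cnt X xs) - real K * p\<bar> < r" by simp
      define e where "e = real N * real (cnt X xs) / real K"
      have "e - real w = (real N / real K) * (real (cnt X xs) - real K * p)"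
        unfolding e_def p_def using N K by (simp add: field_simps)
      hence "\<bar>e - real w\<bar> = (real N / real K) * \<bar>real (cnt X xs) - real K * p\<bar>"
        by (simp add: abs_mult)
      also have "\<dots> < (real N / real K) * r" using lt N K by (intro mult_strict_left_mono) auto
      also have "\<dots> = d / 2" unfolding r_def using N K by (simp add: field_simps)
      finally have ew: "\<bar>e - real w\<bar> < d / 2" .
      have far: "\<bar>e - real w'\<bar> > d / 2" if "w' \<in> Dv N f (\<not> v)" for w'
        using dle[OF that] ew by linarith
      show False
      proof (cases v)
        case True
        have "dec N f K (cnt X xs)"
          unfolding dec_def e_def[symmetric]
        proof (rule bexI[of _ w])
          show "w \<in> Dv N f True" using wD True by simp
          show "\<forall>w0\<in>Dv N f False. \<bar>e - real w\<bar> < \<bar>e - real w0\<bar>"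
          proof
            fix w0 assume "w0 \<in> Dv N f False"
            hence "w0 \<in> Dv N f (\<not> v)" using True by simp
            from far[OF this] ew show "\<bar>e - real w\<bar> < \<bar>e - real w0\<bar>" by linarith
          qed
        qed
        thus False using xs True by simp
      next
        case False
        have "dec N f K (cnt X xs)" using xs False by simp
        then obtain w1 where w1: "w1 \<in> Dv N f True" "\<forall>w0\<in>Dv N f False. \<bar>e - real w1\<bar> < \<bar>e - real w0\<bar>"
          unfolding dec_def e_def[symmetric] by blast
        have "\<bar>e - real w1\<bar> < \<bar>e - real w\<bar>" using w1(2) wD False by simp
        moreover have "\<bar>e - real w1\<bar> > d / 2" using far[of w1] w1(1) False by simp
        ultimately show False using ew by linarith
      qed
    qed
    thus "xs \<in> {xs\<in>Ls N K. \<bar>real (cnt X xs) - real K * p\<bar> \<ge> r}" using xs by simp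
  qed
  have "real (card {xs\<in>Ls N K. dec N f K (cnt X xs) \<noteq> v}) \<le> real (card {xs\<in>Ls N K. \<bar>real (cnt X xs) - real K * p\<bar> \<ge> r})"
    using sub by (intro of_nat_mono card_mono) (auto intro: finite_subset[OF _ finite_Ls])
  moreover have "real (card {xs\<in>Ls N K. \<bar>real (cnt X xs) - real K * p\<bar> \<ge> r}) * r^2
      \<le> real N ^ K * real K * p * (1 - p)"
    using cheb_count[OF rpos, of N K "\<lambda>xs. real (cnt X xs) - real K * p"] var_sum[OF X(1) N, of K]
    unfolding p_def w_def by simp
  ultimately have "real (card {xs\<in>Ls N K. dec N f K (cnt X xs) \<noteq> v}) * r^2 \<le> real N ^ K * real K * p * (1 - p)"
    by (meson mult_right_mono order_trans zero_le_power2)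
  thus ?thesis
    using arith_cheb[of "real K" "real N" d "real N ^ K" _ "real w"] K N dpos Kd
    unfolding r_def p_def by simp
qed



lemma R_const:
  assumes sym: "symmetric_pf N f"
    and noP: "\<And>a b. a < b \<Longrightarrow> \<not> ((a \<in> Dv N f True \<and> b \<in> Dv N f False) \<or> (a \<in> Dv N f False \<and> b \<in> Dv N f True))"
  shows "R_cplx N f \<le> 0"
proof -
  define v0 where "v0 = (Dv N f True \<noteq> {})"
  define P where "P = return_pmf (Leaf v0)"
  have corr: "rand_alg_correct N f P"
    unfolding rand_alg_correct_def
  proof safe
    fix t assume "t \<in> set_pmf P" thus "valid_tree N t" unfolding P_def by simp
  next
    fix X assume X: "X \<in> dom_pf N f"
    then obtain v where fX: "f X = Some v" and lX: "length X = N" unfolding dom_pf_def by auto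
    have wD: "hamming_weight X \<in> Dv N f v" using fX lX unfolding Dv_def by auto
    have "v0 = v"
    proof (cases v)
      case True thus ?thesis using wD unfolding v0_def by auto
    next
      case False
      have "Dv N f True = {}"
      proof (rule ccontr)
        assume "Dv N f True \<noteq> {}"
        then obtain w1 where w1: "w1 \<in> Dv N f True" by auto
        have ne: "hamming_weight X \<noteq> w1" using Dv_disj[OF sym, of "hamming_weight X" False w1] wD w1 False by simp
        show False
        proof (cases "hamming_weight X < w1")
          case True thus False using noP[OF True] wD w1 False by simp
        next
          case False2: False
          hence "w1 < hamming_weight X" using ne by simp
          from noP[OF this] show False using wD w1 False by simp
        qed
      qed
      thus ?thesis using False unfolding v0_def by simp
    qed
    thus "2/3 \<le> measure_pmf.prob P {t. eval_tree t X = the (f X)}"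
      unfolding P_def using fX by simp
  qed
  have "R_cplx N f \<le> rand_alg_cost N f P"
    unfolding R_cplx_def using corr by (intro INF_lower) simp
  also have "rand_alg_cost N f P = 0"
    unfolding rand_alg_cost_def P_def by (cases "dom_pf N f = {}") (simp_all add: bot_ennreal)
  finally show ?thesis .
qed

definition ratio :: "nat \<Rightarrow> nat \<Rightarrow> nat \<Rightarrow> real" where
  "ratio N a b = real ((N - a) * b) / (real (b - a))^2"

lemma Dv_le: "w \<in> Dv N f v \<Longrightarrow> w \<le> N"
  unfolding Dv_def using hw_le by fastforce

lemma ratio_ge1: "a < b \<Longrightarrow> b \<le> N \<Longrightarrow> ratio N a b \<ge> 1"
proof -
  assume ab: "a < b" "b \<le> N"
  have "(b - a) * (b - a) \<le> (N - a) * b" using ab by (intro mult_mono) auto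
  hence "real ((b - a) * (b - a)) \<le> real ((N - a) * b)" by (rule of_nat_mono)
  hence "(real (b - a))^2 \<le> real ((N - a) * b)" by (simp add: power2_eq_square)
  moreover have "(real (b - a))^2 > 0" using ab by simp
  ultimately show ?thesis unfolding ratio_def by simp
qed

lemma weight_prod_le:
  fixes w w' N :: nat
  assumes "w \<le> N" "w' \<le> N" "w \<noteq> w'"
  shows "real w * (real N - real w) \<le> ratio N (min w w') (max w w') * (real w - real w')^2"
proof -
  define a where "a = min w w'"
  define b where "b = max w w'"
  have ab: "a < b" "b \<le> N" using assms unfolding a_def b_def by auto
  have sq: "(real w - real w')^2 = (real (b - a))^2"
    unfolding a_def b_def by (cases "w \<le> w'") (auto simp: of_nat_diff power2_commute)
  have pos: "(real (b - a))^2 > 0" using ab by simp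
  have "ratio N a b * (real w - real w')^2 = real ((N - a) * b)"
    unfolding sq ratio_def using pos by simp
  moreover have "real w * (real N - real w) \<le> real ((N - a) * b)"
  proof -
    have "real w * (real N - real w) = real (w * (N - w))" using assms(1) by (simp add: of_nat_diff)
    moreover have "w * (N - w) \<le> (N - a) * b"
      unfolding a_def b_def using assms by (cases "w \<le> w'") (auto intro: mult_mono simp: min_def max_def)
    ultimately show ?thesis by (metis of_nat_mono)
  qed
  ultimately show ?thesis unfolding a_def b_def by simp
qed

lemma main_bound:
  assumes sym: "symmetric_pf N f"
  shows "R_cplx N f \<le> ennreal 16848 * (Q_cplx N f)^2"
proof -
  define Prs where "Prs = {(a,b). a < b \<and> ((a \<in> Dv N f True \<and> b \<in> Dv N f False) \<or> (a \<in> Dv N f False \<and> b \<in> Dv N f True))}"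
  show ?thesis
  proof (cases "Prs = {}")
    case True
    have "R_cplx N f \<le> 0" by (rule R_const[OF sym]) (use True in \<open>auto simp: Prs_def\<close>)
    thus ?thesis by (metis order_trans zero_le)
  next
    case False
    have fP: "finite Prs"
      by (rule finite_subset[of _ "{..N} \<times> {..N}"]) (auto simp: Prs_def dest: Dv_le)
    define Kmax where "Kmax = Max ((\<lambda>(a,b). ratio N a b) ` Prs)"
    have "Kmax \<in> (\<lambda>(a,b). ratio N a b) ` Prs" unfolding Kmax_def using fP False by (intro Max_in) auto
    then obtain a0 b0 where ab0: "(a0,b0) \<in> Prs" "Kmax = ratio N a0 b0" by auto
    have Kmax_ge: "ratio N a b \<le> Kmax" if "(a,b) \<in> Prs" for a b
      unfolding Kmax_def using fP that by (intro Max_ge) force+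
    have ab0': "a0 < b0" "b0 \<le> N" using ab0(1) unfolding Prs_def by (auto dest: Dv_le)
    have N: "N > 0" using ab0' by simp
    have K1: "Kmax \<ge> 1" using ratio_ge1[OF ab0'] ab0(2) by simp
    define K where "K = nat \<lceil>12 * Kmax\<rceil>"
    have Kr: "real K \<ge> 12 * Kmax" "real K \<le> 12 * Kmax + 1" unfolding K_def using K1 by linarith+
    have Kpos: "K > 0" using Kr K1 by simp
    have Kb: "12 * (real (hamming_weight X) * (real N - real (hamming_weight X))) \<le> real K * (real (hamming_weight X) - real w')^2"
      if X: "length X = N" "f X = Some v" and w': "w' \<in> Dv N f (\<not> v)" for X v w'
    proof -
      define w where "w = hamming_weight X"
      have wD: "w \<in> Dv N f v" using X unfolding Dv_def w_def by auto
      have ne: "w \<noteq> w'" using Dv_disj[OF sym wD w'] .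
      have wN: "w \<le> N" "w' \<le> N" using wD w' by (auto dest: Dv_le)
      have inP: "(min w w', max w w') \<in> Prs"
        using ne wD w' unfolding Prs_def by (cases v; cases "w \<le> w'") (auto simp: min_def max_def)
      have "real w * (real N - real w) \<le> ratio N (min w w') (max w w') * (real w - real w')^2"
        by (rule weight_prod_le[OF wN ne])
      also have "\<dots> \<le> Kmax * (real w - real w')^2"
        using Kmax_ge[OF inP] by (intro mult_right_mono) auto
      finally have "12 * (real w * (real N - real w)) \<le> (12 * Kmax) * (real w - real w')^2" by simp
      also have "\<dots> \<le> real K * (real w - real w')^2" using Kr by (intro mult_right_mono) auto
      finally show ?thesis unfolding w_def .
    qed
    have RK: "R_cplx N f \<le> ennreal (real K)"
    proof (rule alg_bound[OF N])
      fix X assume "X \<in> dom_pf N f"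
      then obtain v where X: "length X = N" "f X = Some v" unfolding dom_pf_def by auto
      show "real (card {xs\<in>Ls N K. dec N f K (cnt X xs) \<noteq> the (f X)}) \<le> real N ^ K / 3"
        using dec_correct[OF sym X N Kpos Kb[OF X]] X by simp
    qed
    have QT: "Kmax \<le> 1296 * (real T)^2" if qc: "quantum_computes N f T" for T
    proof -
      have dj: "(a0 \<in> Dv N f True \<and> b0 \<in> Dv N f False) \<or> (a0 \<in> Dv N f False \<and> b0 \<in> Dv N f True)"
        using ab0(1) unfolding Prs_def by simp
      obtain va vb where v: "a0 \<in> Dv N f va" "b0 \<in> Dv N f vb" "va \<noteq> vb"
      proof (cases "a0 \<in> Dv N f True \<and> b0 \<in> Dv N f False")
        case True thus ?thesis using that[of True False] by simp
      next
        case False thus ?thesis using dj that[of False True] by blast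
      qed
      obtain X where X: "length X = N" "hamming_weight X = a0" "f X = Some va" using v(1) unfolding Dv_def by auto
      obtain Y where Y: "length Y = N" "hamming_weight Y = b0" "f Y = Some vb" using v(2) unfolding Dv_def by auto
      have "real ((N - a0) * b0) \<le> 1296 * (real T)^2 * (real (b0 - a0))^2"
        using Q_lower[OF sym qc X(1,3) Y(1,3) v(3)] X(2) Y(2) ab0' by simp
      moreover have "(real (b0 - a0))^2 > 0" using ab0' by simp
      ultimately show ?thesis unfolding ab0(2) ratio_def by (simp add: divide_le_eq)
    qed
    have RT: "R_cplx N f \<le> ennreal 16848 * (ennreal (real T))^2" if qc: "quantum_computes N f T" for T
    proof -
      have "real K \<le> 13 * Kmax" using Kr K1 by linarith
      also have "\<dots> \<le> 16848 * (real T)^2" using QT[OF qc] by simp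
      finally have "ennreal (real K) \<le> ennreal (16848 * (real T)^2)" by (rule ennreal_leI)
      also have "\<dots> = ennreal 16848 * (ennreal (real T))^2"
        by (simp add: ennreal_mult ennreal_power)
      finally show ?thesis using RK by (rule order_trans[rotated])
    qed
    define S where "S = {T. quantum_computes N f T}"
    show ?thesis
    proof (cases "S = {}")
      case True
      hence "Q_cplx N f = top" unfolding Q_cplx_def S_def[symmetric] by simp
      thus ?thesis by (simp add: power2_eq_square)
    next
      case False
      define T0 where "T0 = Inf S"
      have T0S: "T0 \<in> S" unfolding T0_def using False by (rule Inf_nat_def1)
      have T0le: "T0 \<le> T" if "T \<in> S" for T unfolding T0_def using that by (rule cInf_lower) simp
      have "Q_cplx N f = ennreal (real T0)"
        unfolding Q_cplx_def S_def[symmetric]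
      proof (rule antisym)
        show "(INF T\<in>S. ennreal (real T)) \<le> ennreal (real T0)" using T0S by (rule INF_lower)
        show "ennreal (real T0) \<le> (INF T\<in>S. ennreal (real T))"
          by (rule INF_greatest) (use T0le in \<open>auto intro: ennreal_leI\<close>)
      qed
      thus ?thesis using RT T0S unfolding S_def by simp
    qed
  qed
qed

theorem theorem27:
  shows "\<exists>C::real. C > 0 \<and>
    (\<forall>(N::nat) (f :: bool list \<Rightarrow> bool option).
       symmetric_pf N f \<longrightarrow> R_cplx N f \<le> ennreal C * (Q_cplx N f)^2)"
  using main_bound by (intro exI[of _ 16848]) auto


end
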